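(* Let $(M,d)$ be a complete pointed metric space, let $y\in M$, and let $\mu$ be a positive Radon measure on $\beta\widetilde{M}$ concentrated on $p^{-1}\big((\mathcal{R}(M)\setminus\{y\})\times\{y\}\big)$. Then $\mu\preccurlyeq\nu$ for every positive Radon measure $\nu$ on $\beta\widetilde{M}$ with $\Phi^*\nu=\Phi^*\mu$. In particular, $\mu$ is $\preccurlyeq$-minimal. The same conclusions hold if $\mu$ is concentrated on $p^{-1}\big(\{x\}\times(\mathcal{R}(M)\setminus\{x\})\big)$ for some $x\in M$.
   Context: $\mathrm{Lip}_0(M)$: Lipschitz $f:M\to\mathbb{R}$ with $f(0)=0$ ($0$ the base point) normed by the Lipschitz constant. $\widetilde{M}=\{(x,y)\in M\times M:x\ne y\}$, $\beta\widetilde{M}$ its Stone–Čech compactification; Radon measures identified with $C(\beta\widetilde{M})^*$. $\Phi:\mathrm{Lip}_0(M)\to C(\beta\widetilde{M})$ maps $f$ to the continuous extension of $(x,y)\mapsto(f(x)-f(y))/d(x,y)$; $\Phi^*$ is its adjoint. $M^u$ is the uniform (Samuel) compactification of $M$; $p_1,p_2:\beta\widetilde{M}\to M^u$ continuously extend the coordinate projections, $p=(p_1,p_2)$. $\mathcal{R}(M)=\{\xi\in M^u:\overline{d_0}(\xi)<\infty\}$ where $\overline{d_0}:M^u\to[0,\infty]$ continuously extends $x\mapsto d(x,0)$. $G$ is the set of $g\in C(\beta\widetilde{M})$ with $d(x,y)g(x,y)\le d(x,u)g(x,u)+d(u,y)g(u,y)$ for all distinct $x,u,y\in M$; $\mu\preccurlyeq\nu$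 iff $\int g\,d\mu\le\int g\,d\nu$ for all $g\in G$; $\mu$ is $\preccurlyeq$-minimal if every positive $\nu\preccurlyeq\mu$ satisfies $\mu\preccurlyeq\nu$. Throughout, $M$ has at least three distinct points. *)

theory Defs
  imports "HOL-Analysis.Analysis"
begin

text \<open>The metric space M is the type 'a (class complete_space, i.e. a complete metric
space); the base point is an explicit parameter z.\<close>

definition Mtilde :: "('a::metric_space \<times> 'a) set" where
  "Mtilde = {q. fst q \<noteq> snd q}"

text \<open>Bounded continuous real functions on Mtilde; C_b(Mtilde) = C(beta Mtilde).\<close>
definition Cb_Mtilde :: "('a::metric_space \<times> 'a \<Rightarrow> real) set" where
  "Cb_Mtilde = {f. continuous_on Mtilde f \<and> bounded (f ` Mtilde)}"

definition ev_beta :: "'a::metric_space \<times> 'a \<Rightarrow> (('a \<times> 'a \<Rightarrow> real) \<Rightarrow> real)" where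
  "ev_beta q = restrict (\<lambda>f. f q) Cb_Mtilde"

text \<open>Stone--Cech compactification of Mtilde: closure of the evaluation image.\<close>
definition betaM :: "((('a::metric_space \<times> 'a) \<Rightarrow> real) \<Rightarrow> real) topology" where
  "betaM = subtopology (powertop_real Cb_Mtilde)
              ((powertop_real Cb_Mtilde) closure_of (ev_beta ` Mtilde))"

text \<open>Continuous extension to betaM of a bounded continuous function f on Mtilde.\<close>
definition beta_ext :: "('a::metric_space \<times> 'a \<Rightarrow> real) \<Rightarrow> ((('a \<times> 'a) \<Rightarrow> real) \<Rightarrow> real) \<Rightarrow> real" where
  "beta_ext f = (\<lambda>\<xi>. \<xi> f)"

definition Ucb :: "('a::metric_space \<Rightarrow> real) set" where
  "Ucb = {u. uniformly_continuous_on UNIV u \<and> bounded (range u)}"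

definition ev_u :: "'a::metric_space \<Rightarrow> (('a \<Rightarrow> real) \<Rightarrow> real)" where
  "ev_u x = restrict (\<lambda>u. u x) Ucb"

text \<open>Uniform (Samuel) compactification of M.\<close>
definition Mu :: "(('a::metric_space \<Rightarrow> real) \<Rightarrow> real) topology" where
  "Mu = subtopology (powertop_real Ucb) ((powertop_real Ucb) closure_of (range ev_u))"

text \<open>Continuous extensions p1, p2 : betaM \<rightarrow> Mu of the coordinate projections.\<close>
definition p1 :: "((('a::metric_space \<times> 'a) \<Rightarrow> real) \<Rightarrow> real) \<Rightarrow> (('a \<Rightarrow> real) \<Rightarrow> real)" where
  "p1 \<xi> = restrict (\<lambda>u. \<xi> (\<lambda>q. u (fst q))) Ucb"

definition p2 :: "((('a::metric_space \<times> 'a) \<Rightarrow> real) \<Rightarrow> real) \<Rightarrow> (('a \<Rightarrow> real) \<Rightarrow> real)" where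
  "p2 \<xi> = restrict (\<lambda>u. \<xi> (\<lambda>q. u (snd q))) Ucb"

definition d0bar :: "'a::metric_space \<Rightarrow> (('a \<Rightarrow> real) \<Rightarrow> real) \<Rightarrow> ereal" where
  "d0bar z = (THE g. continuous_map Mu euclidean g \<and> (\<forall>x. g (ev_u x) = ereal (dist x z))
                     \<and> (\<forall>\<xi>. \<xi> \<notin> topspace Mu \<longrightarrow> g \<xi> = 0))"

definition RM :: "'a::metric_space \<Rightarrow> (('a \<Rightarrow> real) \<Rightarrow> real) set" where
  "RM z = {\<xi> \<in> topspace Mu. d0bar z \<xi> < \<infinity>}"

definition Lip0 :: "'a::metric_space \<Rightarrow> ('a \<Rightarrow> real) set" where
  "Lip0 z = {f. (\<exists>C. C-lipschitz_on UNIV f) \<and> f z = 0}"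

definition Phi :: "('a::metric_space \<Rightarrow> real) \<Rightarrow> ((('a \<times> 'a) \<Rightarrow> real) \<Rightarrow> real) \<Rightarrow> real" where
  "Phi f = beta_ext (\<lambda>q. (f (fst q) - f (snd q)) / dist (fst q) (snd q))"

definition borel_of :: "'b topology \<Rightarrow> 'b measure" where
  "borel_of T = sigma (topspace T) {U. openin T U}"

definition radon :: "'b topology \<Rightarrow> 'b measure \<Rightarrow> bool" where
  "radon T \<mu> \<longleftrightarrow> sets \<mu> = sets (borel_of T) \<and> space \<mu> = topspace T \<and> finite_measure \<mu> \<and>
     (\<forall>B\<in>sets \<mu>. emeasure \<mu> B = (SUP K\<in>{K. compactin T K \<and> K \<subseteq> B}. emeasure \<mu> K))"

definition Gset :: "(((('a::metric_space \<times> 'a) \<Rightarrow> real) \<Rightarrow> real) \<Rightarrow> real) set" where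
  "Gset = {g. continuous_map betaM euclideanreal g \<and>
     (\<forall>x u y. x \<noteq> u \<and> u \<noteq> y \<and> x \<noteq> y \<longrightarrow>
        dist x y * g (ev_beta (x, y)) \<le> dist x u * g (ev_beta (x, u)) + dist u y * g (ev_beta (u, y)))}"

definition preceq :: "((('a::metric_space \<times> 'a) \<Rightarrow> real) \<Rightarrow> real) measure \<Rightarrow> ((('a \<times> 'a) \<Rightarrow> real) \<Rightarrow> real) measure \<Rightarrow> bool" where
  "preceq \<mu> \<nu> \<longleftrightarrow> (\<forall>g\<in>Gset. integral\<^sup>L \<mu> g \<le> integral\<^sup>L \<nu> g)"

definition preceq_minimal :: "((('a::metric_space \<times> 'a) \<Rightarrow> real) \<Rightarrow> real) measure \<Rightarrow> bool" where
  "preceq_minimal \<mu> \<longleftrightarrow> (\<forall>\<nu>. radon betaM \<nu> \<and> preceq \<nu> \<mu> \<longrightarrow> preceq \<mu> \<nu>)"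

definition PhiStar_eq :: "'a::metric_space \<Rightarrow> ((('a \<times> 'a) \<Rightarrow> real) \<Rightarrow> real) measure \<Rightarrow> ((('a \<times> 'a) \<Rightarrow> real) \<Rightarrow> real) measure \<Rightarrow> bool" where
  "PhiStar_eq z \<mu> \<nu> \<longleftrightarrow> (\<forall>f\<in>Lip0 z. integral\<^sup>L \<mu> (Phi f) = integral\<^sup>L \<nu> (Phi f))"

definition concentrated_on :: "'b measure \<Rightarrow> 'b set \<Rightarrow> bool" where
  "concentrated_on \<mu> A \<longleftrightarrow> A \<in> sets \<mu> \<and> emeasure \<mu> (space \<mu> - A) = 0"

definition p_preimage :: "(('a::metric_space \<Rightarrow> real) \<Rightarrow> real) set \<Rightarrow> (('a \<Rightarrow> real) \<Rightarrow> real) set \<Rightarrow> ((('a \<times> 'a) \<Rightarrow> real) \<Rightarrow> real) set" where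
  "p_preimage S T = {\<xi> \<in> topspace betaM. p1 \<xi> \<in> S \<and> p2 \<xi> \<in> T}"

end

theory Submission
  imports Defs
begin

lemma betaM_dense_le:
  assumes A: "continuous_map betaM euclideanreal A" and B: "continuous_map betaM euclideanreal B"
    and le: "\<And>q. q \<in> Mtilde \<Longrightarrow> A (ev_beta q) \<le> B (ev_beta q)"
    and xi: "\<xi> \<in> topspace betaM"
  shows "A \<xi> \<le> B \<xi>"
proof -
  let ?P = "powertop_real (Cb_Mtilde::('a::metric_space \<times> 'a \<Rightarrow> real) set)"
  let ?S = "ev_beta ` (Mtilde::('a \<times> 'a) set)"
  have sub: "?S \<subseteq> topspace ?P"
    by (auto simp: ev_beta_def)
  have "?S \<subseteq> ?P closure_of ?S" using sub by (rule closure_of_subset)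
  have cl: "closedin betaM {x \<in> topspace betaM. (\<lambda>x. B x - A x) x \<in> {0..}}"
    by (rule closedin_continuous_map_preimage) (auto intro: continuous_map_diff A B)
  have S1: "?S \<subseteq> {x \<in> topspace betaM. (\<lambda>x. B x - A x) x \<in> {0..}}"
    using le \<open>?S \<subseteq> ?P closure_of ?S\<close> sub by (auto simp: betaM_def)
  have "betaM closure_of ?S = topspace betaM"
  proof -
    have e1: "?P closure_of ?S \<inter> ?S = ?S" using \<open>?S \<subseteq> ?P closure_of ?S\<close> by blast
    have e2: "topspace ?P \<inter> ?P closure_of ?S = ?P closure_of ?S"
      using closure_of_subset_topspace[of ?P ?S] by blast
    show ?thesis unfolding betaM_def closure_of_subtopology e1 topspace_subtopology
      using e2 by (simp add: Int_commute)
  qed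
  then have "topspace betaM \<subseteq> {x \<in> topspace betaM. (\<lambda>x. B x - A x) x \<in> {0..}}"
    using closure_of_minimal[OF S1 cl] by simp
  then show ?thesis using xi by auto
qed

lemma betaM_dense_eq:
  assumes A: "continuous_map betaM euclideanreal A" and B: "continuous_map betaM euclideanreal B"
    and le: "\<And>q. q \<in> Mtilde \<Longrightarrow> A (ev_beta q) = B (ev_beta q)"
    and xi: "\<xi> \<in> topspace betaM"
  shows "A \<xi> = B \<xi>"
  using betaM_dense_le[OF A B _ xi] betaM_dense_le[OF B A _ xi] le by force

lemma proj_cont: "F \<in> Cb_Mtilde \<Longrightarrow> continuous_map betaM euclideanreal (\<lambda>\<xi>. \<xi> F)"
  unfolding betaM_def
  by (rule continuous_map_from_subtopology) (rule continuous_map_product_projection)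

lemma ev_beta_app: "F \<in> Cb_Mtilde \<Longrightarrow> ev_beta q F = F q"
  by (simp add: ev_beta_def)

lemma bounded_Mt: fixes F :: "'a::metric_space \<times> 'a \<Rightarrow> real" shows "bounded (F ` Mtilde) \<longleftrightarrow> (\<exists>b. \<forall>q\<in>Mtilde. \<bar>F q\<bar> \<le> b)"
  unfolding bounded_real by blast

lemma Cb_iff: "F \<in> Cb_Mtilde \<longleftrightarrow> continuous_on Mtilde F \<and> (\<exists>b. \<forall>q\<in>Mtilde. \<bar>F q\<bar> \<le> b)"
  by (simp add: Cb_Mtilde_def bounded_Mt)

lemma Cb_const: "(\<lambda>q. c) \<in> Cb_Mtilde"
  unfolding Cb_iff by (auto intro: continuous_intros)

lemma Cb_add: "F \<in> Cb_Mtilde \<Longrightarrow> G \<in> Cb_Mtilde \<Longrightarrow> (\<lambda>q. F q + G q) \<in> Cb_Mtilde"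
  unfolding Cb_iff
proof (elim conjE exE, intro conjI)
  fix a b assume "\<forall>q\<in>Mtilde. \<bar>F q\<bar> \<le> a" "\<forall>q\<in>Mtilde. \<bar>G q\<bar> \<le> b"
  then show "\<exists>b. \<forall>q\<in>Mtilde. \<bar>F q + G q\<bar> \<le> b"
    by (intro exI[of _ "a+b"]) (smt (verit))
qed (auto intro: continuous_intros)

lemma Cb_mult: fixes F G :: "'a::metric_space \<times> 'a \<Rightarrow> real" shows "F \<in> Cb_Mtilde \<Longrightarrow> G \<in> Cb_Mtilde \<Longrightarrow> (\<lambda>q. F q * G q) \<in> Cb_Mtilde"
  unfolding Cb_iff
proof (elim conjE exE, intro conjI)
  fix a b assume A: "\<forall>q\<in>Mtilde. \<bar>F q\<bar> \<le> a" "\<forall>q\<in>Mtilde. \<bar>G q\<bar> \<le> b"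
  show "\<exists>b. \<forall>q\<in>Mtilde. \<bar>F q * G q\<bar> \<le> b"
  proof (intro exI[of _ "a*b"] ballI)
    fix q :: "'a \<times> 'a" assume "q \<in> Mtilde"
    then show "\<bar>F q * G q\<bar> \<le> a * b" using A
      by (simp add: abs_mult mult_mono')
  qed
qed (auto intro: continuous_intros)

lemma Cb_diff: "F \<in> Cb_Mtilde \<Longrightarrow> G \<in> Cb_Mtilde \<Longrightarrow> (\<lambda>q. F q - G q) \<in> Cb_Mtilde"
  unfolding Cb_iff
proof (elim conjE exE, intro conjI)
  fix a b assume "\<forall>q\<in>Mtilde. \<bar>F q\<bar> \<le> a" "\<forall>q\<in>Mtilde. \<bar>G q\<bar> \<le> b"
  then show "\<exists>b. \<forall>q\<in>Mtilde. \<bar>F q - G q\<bar> \<le> b"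
    by (intro exI[of _ "a+b"]) (smt (verit))
qed (auto intro: continuous_intros)

lemma xi_le: "F \<in> Cb_Mtilde \<Longrightarrow> G \<in> Cb_Mtilde \<Longrightarrow> (\<And>q. q \<in> Mtilde \<Longrightarrow> F q \<le> G q)
   \<Longrightarrow> \<xi> \<in> topspace betaM \<Longrightarrow> \<xi> F \<le> \<xi> G"
  by (rule betaM_dense_le[where A="\<lambda>\<xi>. \<xi> F" and B="\<lambda>\<xi>. \<xi> G"])
     (auto simp: proj_cont ev_beta_app)

lemma xi_const: "\<xi> \<in> topspace betaM \<Longrightarrow> \<xi> (\<lambda>q. c) = c"
  by (rule betaM_dense_eq[where A="\<lambda>\<xi>. \<xi> (\<lambda>q. c)" and B="\<lambda>\<xi>. c"])
     (auto simp: proj_cont ev_beta_app Cb_const)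

lemma xi_add: "F \<in> Cb_Mtilde \<Longrightarrow> G \<in> Cb_Mtilde \<Longrightarrow> \<xi> \<in> topspace betaM
   \<Longrightarrow> \<xi> (\<lambda>q. F q + G q) = \<xi> F + \<xi> G"
  by (rule betaM_dense_eq[where A="\<lambda>\<xi>. \<xi> (\<lambda>q. F q + G q)" and B="\<lambda>\<xi>. \<xi> F + \<xi> G"])
     (auto simp: proj_cont ev_beta_app Cb_add intro: continuous_map_add)

lemma xi_mult: "F \<in> Cb_Mtilde \<Longrightarrow> G \<in> Cb_Mtilde \<Longrightarrow> \<xi> \<in> topspace betaM
   \<Longrightarrow> \<xi> (\<lambda>q. F q * G q) = \<xi> F * \<xi> G"
  by (rule betaM_dense_eq[where A="\<lambda>\<xi>. \<xi> (\<lambda>q. F q * G q)" and B="\<lambda>\<xi>. \<xi> F * \<xi> G"])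
     (auto simp: proj_cont ev_beta_app Cb_mult intro: continuous_map_real_mult)

lemma xi_diff: "F \<in> Cb_Mtilde \<Longrightarrow> G \<in> Cb_Mtilde \<Longrightarrow> \<xi> \<in> topspace betaM
   \<Longrightarrow> \<xi> (\<lambda>q. F q - G q) = \<xi> F - \<xi> G"
  by (rule betaM_dense_eq[where A="\<lambda>\<xi>. \<xi> (\<lambda>q. F q - G q)" and B="\<lambda>\<xi>. \<xi> F - \<xi> G"])
     (auto simp: proj_cont ev_beta_app Cb_diff intro: continuous_map_diff)

lemma xi_scale: "F \<in> Cb_Mtilde \<Longrightarrow> \<xi> \<in> topspace betaM
   \<Longrightarrow> \<xi> (\<lambda>q. c * F q) = c * \<xi> F"
  using xi_mult[OF Cb_const, of F \<xi> c] xi_const[of \<xi> c] by simp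

lemma compact_betaM: "compact_space betaM"
proof -
  let ?P = "powertop_real (Cb_Mtilde::('a::metric_space \<times> 'a \<Rightarrow> real) set)"
  let ?S = "ev_beta ` (Mtilde::('a \<times> 'a) set)"
  define bd where "bd F = (SOME b. \<forall>q\<in>(Mtilde::('a\<times>'a) set). \<bar>F q\<bar> \<le> b)" for F :: "'a::metric_space \<times> 'a \<Rightarrow> real"
  have bd: "\<forall>q\<in>Mtilde. \<bar>F q\<bar> \<le> bd F" if "F \<in> Cb_Mtilde" for F
  proof -
    have "\<exists>b. \<forall>q\<in>(Mtilde::('a\<times>'a) set). \<bar>F q\<bar> \<le> b" using that unfolding Cb_iff by blast
    then show ?thesis unfolding bd_def by (rule someI_ex)
  qed
  let ?K = "PiE Cb_Mtilde (\<lambda>F. {-bd F..bd F})"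
  have K: "compactin ?P ?K"
    unfolding compactin_PiE by simp
  have Kc: "closedin ?P ?K"
    by (rule compactin_imp_closedin[OF _ K]) (simp add: Hausdorff_space_product_topology)
  have "ev_beta q \<in> ?K" if "q \<in> Mtilde" for q :: "'a \<times> 'a"
    unfolding ev_beta_def restrict_PiE_iff
  proof
    fix F :: "'a \<times> 'a \<Rightarrow> real" assume "F \<in> Cb_Mtilde"
    then have "\<bar>F q\<bar> \<le> bd F" using bd that by blast
    then show "F q \<in> {-bd F..bd F}" by (simp add: abs_le_iff)
  qed
  then have "?S \<subseteq> ?K" by blast
  then have "?P closure_of ?S \<subseteq> ?K" by (rule closure_of_minimal[OF _ Kc])
  then have "compactin ?P (?P closure_of ?S)"
    by (rule closed_compactin[OF K]) simp
  then show ?thesis unfolding betaM_def by (rule compact_space_subtopology)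
qed

lemma cont_bounded:
  assumes "continuous_map betaM euclideanreal g"
  shows "\<exists>B. \<forall>\<xi>\<in>topspace betaM. \<bar>g \<xi>\<bar> \<le> B"
proof -
  have "compactin euclideanreal (g ` topspace betaM)"
    by (rule image_compactin[OF _ assms]) (use compact_betaM in \<open>simp add: compact_space_def\<close>)
  then have "bounded (g ` topspace betaM)" by (simp add: compact_imp_bounded)
  then show ?thesis by (auto simp: bounded_iff)
qed


lemma ev_beta_in: "q \<in> Mtilde \<Longrightarrow> ev_beta q \<in> topspace betaM"
proof -
  let ?P = "powertop_real (Cb_Mtilde::('a::metric_space \<times> 'a \<Rightarrow> real) set)"
  assume q: "q \<in> (Mtilde :: ('a \<times> 'a) set)"
  have sub: "ev_beta ` Mtilde \<subseteq> topspace ?P"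
    by (auto simp: ev_beta_def)
  have "ev_beta ` Mtilde \<subseteq> ?P closure_of (ev_beta ` Mtilde)" using sub by (rule closure_of_subset)
  then show ?thesis using q sub by (auto simp: betaM_def)
qed

lemma ev_beta_cont: "continuous_map (top_of_set (Mtilde::('a::metric_space\<times>'a) set)) betaM ev_beta"
  unfolding betaM_def
proof (rule continuous_map_into_subtopology)
  show "continuous_map (top_of_set (Mtilde::('a::metric_space\<times>'a) set)) (powertop_real Cb_Mtilde) ev_beta"
    unfolding continuous_map_componentwise
  proof (intro conjI ballI)
    show "ev_beta ` topspace (top_of_set (Mtilde::('a::metric_space\<times>'a) set)) \<subseteq> extensional Cb_Mtilde"
      by (auto simp: ev_beta_def)
    fix F :: "'a \<times> 'a \<Rightarrow> real" assume F: "F \<in> Cb_Mtilde"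
    then have "continuous_on Mtilde F" by (simp add: Cb_Mtilde_def)
    then show "continuous_map (top_of_set (Mtilde::('a::metric_space\<times>'a) set)) euclideanreal (\<lambda>x. ev_beta x F)"
      using F by (simp add: ev_beta_app)
  qed
  show "ev_beta \<in> topspace (top_of_set (Mtilde::('a::metric_space\<times>'a) set)) \<rightarrow> powertop_real Cb_Mtilde closure_of ev_beta ` Mtilde"
    using ev_beta_in unfolding betaM_def by auto
qed

lemma k_Cb:
  assumes g: "continuous_map betaM euclideanreal g"
  shows "(\<lambda>q. g (ev_beta q)) \<in> Cb_Mtilde"
  unfolding Cb_iff
proof
  have "continuous_map (top_of_set Mtilde) euclideanreal (g \<circ> ev_beta)"
    by (rule continuous_map_compose[OF ev_beta_cont g])
  then show "continuous_on Mtilde (\<lambda>q. g (ev_beta q))" by (simp add: o_def)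
  obtain B where "\<forall>\<xi>\<in>topspace betaM. \<bar>g \<xi>\<bar> \<le> B" using cont_bounded[OF g] by blast
  then show "\<exists>b. \<forall>q\<in>Mtilde. \<bar>g (ev_beta q)\<bar> \<le> b" using ev_beta_in by blast
qed

lemma g_eval:
  assumes g: "continuous_map betaM euclideanreal g" and xi: "\<xi> \<in> topspace betaM"
  shows "g \<xi> = \<xi> (\<lambda>q. g (ev_beta q))"
  by (rule betaM_dense_eq[OF g proj_cont[OF k_Cb[OF g]] _ xi]) (simp add: ev_beta_app k_Cb[OF g])

definition hG :: "(((('a::metric_space \<times> 'a) \<Rightarrow> real) \<Rightarrow> real) \<Rightarrow> real) \<Rightarrow> 'a \<Rightarrow> 'a \<Rightarrow> real" where
  "hG g x u = dist x u * g (ev_beta (x, u))"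

lemma hG_tri:
  fixes x u w :: "'a::metric_space"
  assumes g: "g \<in> Gset" and three: "\<exists>a b c :: 'a. a \<noteq> b \<and> b \<noteq> c \<and> a \<noteq> c"
  shows "hG g x w \<le> hG g x u + hG g u w"
proof -
  have G: "hG g a c \<le> hG g a b + hG g b c" if "a \<noteq> b" "b \<noteq> c" "a \<noteq> c" for a b c :: 'a
    using g that unfolding Gset_def hG_def by blast
  have T0: "0 \<le> hG g a b + hG g b a" if "a \<noteq> b" for a b :: 'a
  proof -
    obtain v :: 'a where v: "v \<noteq> a" "v \<noteq> b" using three by metis
    have "hG g v a \<le> hG g v b + hG g b a" using G[of v b a] v that by auto
    moreover have "hG g v b \<le> hG g v a + hG g a b" using G[of v a b] v that by auto
    ultimately show ?thesis by linarith
  qed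
  have z: "hG g a a = 0" for a :: 'a by (simp add: hG_def)
  show ?thesis
  proof (cases "x = w")
    case True
    then show ?thesis using T0[of x u] z by (cases "x = u") auto
  next
    case False
    then show ?thesis using G[of x u w] z by (cases "x = u"; cases "u = w") auto
  qed
qed

lemma hG_bound:
  assumes B: "\<forall>\<xi>\<in>topspace betaM. \<bar>g \<xi>\<bar> \<le> B"
  shows "\<bar>hG g x u\<bar> \<le> B * dist x u"
proof (cases "x = u")
  case False
  then have "ev_beta (x,u) \<in> topspace betaM" by (intro ev_beta_in) (simp add: Mtilde_def)
  then have "\<bar>g (ev_beta (x,u))\<bar> \<le> B" using B by blast
  then have "dist x u * \<bar>g (ev_beta (x,u))\<bar> \<le> dist x u * B"
    by (rule mult_left_mono) simp
  then show ?thesis by (simp add: hG_def abs_mult mult.commute)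
qed (simp add: hG_def)

definition quot :: "('a::metric_space \<Rightarrow> real) \<Rightarrow> 'a \<times> 'a \<Rightarrow> real" where
  "quot f = (\<lambda>q. (f (fst q) - f (snd q)) / dist (fst q) (snd q))"

lemma Phi_quot: "Phi f = (\<lambda>\<xi>. \<xi> (quot f))"
  by (simp add: Phi_def beta_ext_def quot_def)

lemma quot_Cb:
  assumes L: "\<And>x u. \<bar>f x - f u\<bar> \<le> L * dist x u" and L0: "0 \<le> L"
  shows "quot f \<in> Cb_Mtilde"
  unfolding Cb_iff
proof
  have "L-lipschitz_on UNIV f"
  proof (rule lipschitz_onI)
    show "dist (f x) (f y) \<le> L * dist x y" for x y using L[of x y] by (simp add: dist_real_def)
  qed (rule L0)
  then have fc: "continuous_on UNIV f" by (rule lipschitz_on_continuous_on)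
  show "continuous_on Mtilde (quot f)" unfolding quot_def
    by (intro continuous_intros continuous_on_compose2[OF fc]) (auto simp: Mtilde_def)
  show "\<exists>b. \<forall>q\<in>Mtilde. \<bar>quot f q\<bar> \<le> b"
  proof (intro exI ballI)
    fix q :: "'a \<times> 'a" assume "q \<in> Mtilde"
    then have d: "dist (fst q) (snd q) > 0" by (simp add: Mtilde_def)
    show "\<bar>quot f q\<bar> \<le> L" unfolding quot_def abs_divide using d L[of "fst q" "snd q"]
      by (simp add: divide_le_eq)
  qed
qed


lemma Ucb_comp:
  assumes u: "u \<in> Ucb" and pi: "continuous_on UNIV (\<pi> :: 'a::metric_space \<times> 'a \<Rightarrow> 'a)"
  shows "(\<lambda>q. u (\<pi> q)) \<in> Cb_Mtilde"
  unfolding Cb_iff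
proof
  have uc: "continuous_on UNIV u" using u unfolding Ucb_def
    by (blast intro: uniformly_continuous_imp_continuous)
  show "continuous_on Mtilde (\<lambda>q. u (\<pi> q))"
    by (rule continuous_on_compose2[OF uc continuous_on_subset[OF pi]]) auto
  obtain b where "\<forall>x. \<bar>u x\<bar> \<le> b" using u unfolding Ucb_def bounded_real by blast
  then show "\<exists>b. \<forall>q\<in>Mtilde. \<bar>u (\<pi> q)\<bar> \<le> b" by blast
qed

lemma dmin_Ucb: fixes y :: "'a::metric_space" shows "(\<lambda>x. min (dist x y) 1) \<in> Ucb"
  unfolding Ucb_def mem_Collect_eq
proof
  have "1-lipschitz_on UNIV (\<lambda>x. min (dist x y) 1)"
  proof (rule lipschitz_onI)
    fix a b :: 'a
    have "\<bar>dist a y - dist b y\<bar> \<le> dist a b"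
      using dist_triangle[of a y b] dist_triangle[of b y a] by (simp add: dist_commute abs_le_iff)
    then show "dist (min (dist a y) 1) (min (dist b y) 1) \<le> 1 * dist a b"
      unfolding dist_real_def by linarith
  qed simp
  then show "uniformly_continuous_on UNIV (\<lambda>x. min (dist x y) 1)"
    by (rule lipschitz_on_uniformly_continuous)
  show "bounded (range (\<lambda>x. min (dist x y) 1))"
    unfolding bounded_real by (intro exI[of _ 1]) auto
qed

lemma xi_pos:
  assumes xi: "\<xi> \<in> topspace betaM" and u: "u \<in> Ucb"
    and pi: "continuous_on UNIV (\<pi> :: 'a::metric_space \<times> 'a \<Rightarrow> 'a)"
    and ne: "\<xi> (\<lambda>q. u (\<pi> q)) \<noteq> u y"
  shows "\<xi> (\<lambda>q. min (dist (\<pi> q) y) 1) > 0"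
proof (rule ccontr)
  let ?D = "\<lambda>q. min (dist (\<pi> q) y) 1"
  let ?U = "\<lambda>q. u (\<pi> q)"
  have DC: "?D \<in> Cb_Mtilde" using Ucb_comp[OF dmin_Ucb pi] .
  have UC: "?U \<in> Cb_Mtilde" using Ucb_comp[OF u pi] .
  assume "\<not> ?thesis"
  moreover have "\<xi> (\<lambda>q. 0) \<le> \<xi> ?D" by (rule xi_le[OF Cb_const DC _ xi]) simp
  ultimately have D0: "\<xi> ?D = 0" using xi_const[OF xi] by simp
  obtain bu where bu: "\<forall>x. \<bar>u x\<bar> \<le> bu" using u unfolding Ucb_def bounded_real by blast
  have "\<bar>\<xi> ?U - u y\<bar> \<le> e" if e: "e > 0" for e
  proof -
    have "uniformly_continuous_on UNIV u" using u by (simp add: Ucb_def)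
    then obtain d where d: "d > 0" and dd: "\<forall>x x'. dist x' x < d \<longrightarrow> dist (u x') (u x) < e"
      unfolding uniformly_continuous_on_def using e by blast
    define C where "C = 2 * bu / min d 1"
    have md: "min d 1 > 0" using d by simp
    have bu0: "bu \<ge> 0" using bu[rule_format, of y] by linarith
    have C0: "C \<ge> 0" unfolding C_def using md bu0 by simp
    have pw: "\<bar>u x - u y\<bar> \<le> e + C * min (dist x y) 1" for x
    proof (cases "dist x y < d")
      case True
      then have "\<bar>u x - u y\<bar> < e" using dd by (auto simp: dist_real_def)
      moreover have "C * min (dist x y) 1 \<ge> 0" using C0 by simp
      ultimately show ?thesis by linarith
    next
      case False
      then have "min (dist x y) 1 \<ge> min d 1" by linarith
      then have "C * min (dist x y) 1 \<ge> C * min d 1" using C0 by (rule mult_left_mono)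
      moreover have "C * min d 1 = 2 * bu" unfolding C_def using md by simp
      moreover have "\<bar>u x - u y\<bar> \<le> 2 * bu" using bu[rule_format, of x] bu[rule_format, of y] by linarith
      ultimately show ?thesis using e by linarith
    qed
    have pw2: "u y - e + - C * ?D q \<le> ?U q" "?U q \<le> (u y + e) + C * ?D q" for q
      using pw[of "\<pi> q"] by (auto simp: abs_le_iff)
    have c1: "(\<lambda>q. (u y + e) + C * ?D q) \<in> Cb_Mtilde" by (intro Cb_add Cb_const Cb_mult DC)
    have c2: "(\<lambda>q. (u y - e) + (- C) * ?D q) \<in> Cb_Mtilde" by (intro Cb_add Cb_const Cb_mult DC)
    have "\<xi> ?U \<le> \<xi> (\<lambda>q. (u y + e) + C * ?D q)"
      by (rule xi_le[OF UC c1 _ xi]) (rule pw2)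
    also have "\<dots> = \<xi> (\<lambda>q. u y + e) + \<xi> (\<lambda>q. C * ?D q)"
      by (rule xi_add[OF Cb_const Cb_mult[OF Cb_const DC] xi])
    also have "\<dots> = u y + e"
      using xi_const[OF xi] xi_scale[OF DC xi] D0 by simp
    finally have 1: "\<xi> ?U \<le> u y + e" .
    have "\<xi> (\<lambda>q. (u y - e) + (- C) * ?D q) \<le> \<xi> ?U"
      by (rule xi_le[OF c2 UC _ xi]) (rule pw2)
    moreover have "\<xi> (\<lambda>q. (u y - e) + (- C) * ?D q) = \<xi> (\<lambda>q. u y - e) + \<xi> (\<lambda>q. (- C) * ?D q)"
      by (rule xi_add[OF Cb_const Cb_mult[OF Cb_const DC] xi])
    moreover have "\<xi> (\<lambda>q. u y - e) + \<xi> (\<lambda>q. (- C) * ?D q) = u y - e"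
      using xi_const[OF xi] xi_scale[OF DC xi, of "-C"] D0 by simp
    ultimately show ?thesis using 1 by linarith
  qed
  then have "\<bar>\<xi> ?U - u y\<bar> \<le> 0"
    by (rule field_le_epsilon) simp
  then have "\<xi> ?U = u y" by simp
  with ne show False by simp
qed

lemma core:
  assumes xi: "\<xi> \<in> topspace betaM"
    and F1: "F1 \<in> Cb_Mtilde" and F2: "F2 \<in> Cb_Mtilde" and P: "P \<in> Cb_Mtilde" and Q: "Q \<in> Cb_Mtilde"
    and Q0: "\<xi> Q = 0" and P0: "\<xi> P > 0"
    and bnd: "\<And>q. q \<in> Mtilde \<Longrightarrow> \<bar>(F1 q - F2 q) * P q\<bar> \<le> C * Q q"
  shows "\<xi> F1 = \<xi> F2"
proof -
  let ?E = "\<lambda>q. (F1 q - F2 q) * P q"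
  have E: "?E \<in> Cb_Mtilde" by (intro Cb_mult Cb_diff F1 F2 P)
  have CQ: "(\<lambda>q. C * Q q) \<in> Cb_Mtilde" by (intro Cb_mult Cb_const Q)
  have mE: "(\<lambda>q. (-1) * ?E q) \<in> Cb_Mtilde" by (intro Cb_mult Cb_const E)
  have "\<xi> ?E \<le> \<xi> (\<lambda>q. C * Q q)" by (rule xi_le[OF E CQ _ xi]) (use bnd in \<open>smt (verit)\<close>)
  moreover have "\<xi> (\<lambda>q. (-1) * ?E q) \<le> \<xi> (\<lambda>q. C * Q q)" by (rule xi_le[OF mE CQ _ xi]) (use bnd in \<open>smt (verit)\<close>)
  ultimately have "\<xi> ?E = 0" using xi_scale[OF Q xi, of C] xi_scale[OF E xi, of "-1"] Q0 by simp
  moreover have "\<xi> ?E = (\<xi> F1 - \<xi> F2) * \<xi> P"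
    using xi_mult[OF Cb_diff[OF F1 F2] P xi] xi_diff[OF F1 F2 xi] by simp
  ultimately show ?thesis using P0 by simp
qed

lemma arith_core:
  fixes N dd a mx mw B :: real
  assumes "dd > 0" "\<bar>N\<bar> \<le> 2 * B * a" "\<bar>N / dd\<bar> \<le> 2 * B" "mw = min a 1"
    "mx \<le> min dd 1 + mw" "mx \<ge> 0" "B \<ge> 0" "a \<ge> 0"
  shows "\<bar>N / dd\<bar> * mx \<le> 4 * B * mw"
proof -
  have 1: "\<bar>N / dd\<bar> * min dd 1 \<le> 2 * B * mw"
  proof (cases "a \<le> 1")
    case True
    have "\<bar>N / dd\<bar> * min dd 1 \<le> \<bar>N / dd\<bar> * dd" by (rule mult_left_mono) auto
    also have "\<dots> = \<bar>N\<bar>" using assms(1) by (simp add: abs_divide)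
    finally show ?thesis using True assms by simp
  next
    case False
    have "\<bar>N / dd\<bar> * min dd 1 \<le> \<bar>N / dd\<bar> * 1" by (rule mult_left_mono) auto
    then show ?thesis using False assms by simp
  qed
  have 2: "\<bar>N / dd\<bar> * mw \<le> 2 * B * mw"
    by (rule mult_right_mono) (use assms in auto)
  have "\<bar>N / dd\<bar> * mx \<le> \<bar>N / dd\<bar> * (min dd 1 + mw)" by (rule mult_left_mono) (use assms in auto)
  then show ?thesis using 1 2 by (simp add: distrib_left)
qed


lemma min_tri: "(x::real) \<le> s + t \<Longrightarrow> s \<ge> 0 \<Longrightarrow> t \<ge> 0 \<Longrightarrow> min x 1 \<le> min s 1 + min t 1"
  by (auto simp: min_def)

lemma B_nonneg:
  assumes three: "\<exists>a b c :: 'a::metric_space. a \<noteq> b \<and> b \<noteq> c \<and> a \<noteq> c"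
    and B: "\<forall>\<xi>\<in>topspace betaM. \<bar>(g::((('a \<times> 'a) \<Rightarrow> real) \<Rightarrow> real) \<Rightarrow> real) \<xi>\<bar> \<le> B"
  shows "B \<ge> 0"
proof -
  obtain a b :: 'a where "a \<noteq> b" using three by blast
  then have "ev_beta (a,b) \<in> topspace betaM" by (intro ev_beta_in) (simp add: Mtilde_def)
  then show ?thesis using B by force
qed

lemma phi_basic:
  fixes f :: "'a::metric_space \<Rightarrow> real"
  assumes g: "g \<in> Gset" and three: "\<exists>a b c :: 'a. a \<noteq> b \<and> b \<noteq> c \<and> a \<noteq> c"
    and B: "\<forall>\<xi>\<in>topspace betaM. \<bar>g \<xi>\<bar> \<le> B"
    and fi: "\<And>x u. f x - f u \<le> hG g x u"
  shows "\<And>x u. \<bar>f x - f u\<bar> \<le> B * dist x u"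
    and "quot f \<in> Cb_Mtilde"
    and "\<And>q. q \<in> Mtilde \<Longrightarrow> quot f q \<le> g (ev_beta q)"
    and "\<And>\<xi>. \<xi> \<in> topspace betaM \<Longrightarrow> Phi f \<xi> \<le> g \<xi>"
proof -
  have gc: "continuous_map betaM euclideanreal g" using g by (simp add: Gset_def)
  show L: "\<bar>f x - f u\<bar> \<le> B * dist x u" for x u
    using fi[of x u] fi[of u x] hG_bound[OF B, of x u] hG_bound[OF B, of u x]
    by (simp add: dist_commute abs_le_iff)
  show Q: "quot f \<in> Cb_Mtilde" by (rule quot_Cb[OF L B_nonneg[OF three B]])
  show le: "quot f q \<le> g (ev_beta q)" if "q \<in> Mtilde" for q
  proof -
    have d: "dist (fst q) (snd q) > 0" using that by (simp add: Mtilde_def)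
    have "f (fst q) - f (snd q) \<le> dist (fst q) (snd q) * g (ev_beta q)"
      using fi[of "fst q" "snd q"] by (simp add: hG_def)
    then show ?thesis unfolding quot_def using d by (simp add: divide_le_eq mult.commute)
  qed
  show "Phi f \<xi> \<le> g \<xi>" if "\<xi> \<in> topspace betaM" for \<xi>
    unfolding Phi_quot g_eval[OF gc that]
    by (rule xi_le[OF Q k_Cb[OF gc] le that])
qed

lemma phi_eq:
  fixes f :: "'a::metric_space \<Rightarrow> real" and y :: 'a
  assumes g: "g \<in> Gset" and three: "\<exists>a b c :: 'a. a \<noteq> b \<and> b \<noteq> c \<and> a \<noteq> c"
    and B: "\<forall>\<xi>\<in>topspace betaM. \<bar>g \<xi>\<bar> \<le> B"
    and fi: "\<And>x u. f x - f u \<le> hG g x u"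
    and pi1: "continuous_on UNIV \<pi>1" and pi2: "continuous_on UNIV \<pi>2"
    and xi: "\<xi> \<in> topspace betaM"
    and Q0: "\<xi> (\<lambda>q. min (dist (\<pi>2 q) y) 1) = 0"
    and P0: "\<xi> (\<lambda>q. min (dist (\<pi>1 q) y) 1) > 0"
    and Nb: "\<And>q. q \<in> Mtilde \<Longrightarrow> \<bar>f (fst q) - f (snd q) - hG g (fst q) (snd q)\<bar> \<le> 2 * B * dist (\<pi>2 q) y"
    and tri: "\<And>q. q \<in> Mtilde \<Longrightarrow> dist (\<pi>1 q) y \<le> dist (fst q) (snd q) + dist (\<pi>2 q) y"
  shows "Phi f \<xi> = g \<xi>"
proof -
  have gc: "continuous_map betaM euclideanreal g" using g by (simp add: Gset_def)
  note basic = phi_basic[OF g three B fi]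
  have B0: "B \<ge> 0" by (rule B_nonneg[OF three B])
  have "\<xi> (quot f) = \<xi> (\<lambda>q. g (ev_beta q))"
  proof (rule core[OF xi basic(2) k_Cb[OF gc] Ucb_comp[OF dmin_Ucb pi1] Ucb_comp[OF dmin_Ucb pi2] Q0 P0])
    fix q :: "'a \<times> 'a" assume q: "q \<in> Mtilde"
    define dd where "dd = dist (fst q) (snd q)"
    define N where "N = f (fst q) - f (snd q) - hG g (fst q) (snd q)"
    have d: "dd > 0" using q by (simp add: Mtilde_def dd_def)
    have kq: "g (ev_beta q) = hG g (fst q) (snd q) / dd" using d
      by (simp add: hG_def dd_def)
    have e: "quot f q - g (ev_beta q) = N / dd"
      unfolding kq quot_def N_def dd_def[symmetric] by (simp add: diff_divide_distrib)
    have gb: "\<bar>g (ev_beta q)\<bar> \<le> B" using B ev_beta_in[OF q] by blast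
    have qb: "\<bar>quot f q\<bar> \<le> B"
      unfolding quot_def abs_divide using d basic(1)[of "fst q" "snd q"]
      by (simp add: divide_le_eq dd_def)
    have Nd: "\<bar>N / dd\<bar> \<le> 2 * B" using e gb qb by linarith
    have "\<bar>N / dd\<bar> * min (dist (\<pi>1 q) y) 1 \<le> 4 * B * min (dist (\<pi>2 q) y) 1"
      by (rule arith_core[OF d _ Nd refl]) (use Nb[OF q] tri[OF q] B0 in \<open>auto simp: N_def dd_def intro: min_tri\<close>)
    then show "\<bar>(quot f q - g (ev_beta q)) * min (dist (\<pi>1 q) y) 1\<bar> \<le> 4 * B * min (dist (\<pi>2 q) y) 1"
      unfolding e by (simp add: abs_mult)
  qed
  then show ?thesis unfolding Phi_quot g_eval[OF gc xi] .
qed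


lemma p2_eval:
  assumes "p2 \<xi> = ev_u y" "u \<in> Ucb"
  shows "\<xi> (\<lambda>q. u (snd q)) = u y"
  using fun_cong[OF assms(1), of u] assms(2) by (simp add: p2_def ev_u_def)

lemma p1_eval:
  assumes "p1 \<xi> = ev_u y" "u \<in> Ucb"
  shows "\<xi> (\<lambda>q. u (fst q)) = u y"
  using fun_cong[OF assms(1), of u] assms(2) by (simp add: p1_def ev_u_def)

lemma p1_ne:
  assumes "p1 \<xi> \<noteq> ev_u y"
  shows "\<exists>u\<in>Ucb. \<xi> (\<lambda>q. u (fst q)) \<noteq> u y"
proof (rule ccontr)
  assume "\<not> ?thesis"
  then have "p1 \<xi> = ev_u y" unfolding p1_def ev_u_def by (intro restrict_ext) auto
  with assms show False by simp
qed

lemma p2_ne: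
  assumes "p2 \<xi> \<noteq> ev_u y"
  shows "\<exists>u\<in>Ucb. \<xi> (\<lambda>q. u (snd q)) \<noteq> u y"
proof (rule ccontr)
  assume "\<not> ?thesis"
  then have "p2 \<xi> = ev_u y" unfolding p2_def ev_u_def by (intro restrict_ext) auto
  with assms show False by simp
qed

lemma case_y:
  fixes y :: "'a::metric_space"
  assumes g: "g \<in> Gset" and three: "\<exists>a b c :: 'a. a \<noteq> b \<and> b \<noteq> c \<and> a \<noteq> c"
    and B: "\<forall>\<xi>\<in>topspace betaM. \<bar>g \<xi>\<bar> \<le> B"
  shows "\<And>x u. (\<lambda>x. hG g x y) x - (\<lambda>x. hG g x y) u \<le> hG g x u"
    and "\<And>\<xi>. \<xi> \<in> p_preimage (S - {ev_u y}) {ev_u y} \<Longrightarrow> Phi (\<lambda>x. hG g x y) \<xi> = g \<xi>"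
proof -
  note tr = hG_tri[OF g three]
  show fi: "(\<lambda>x. hG g x y) x - (\<lambda>x. hG g x y) u \<le> hG g x u" for x u
    using tr[of x y u] by simp
  fix \<xi> assume xi: "\<xi> \<in> p_preimage (S - {ev_u y}) {ev_u y}"
  then have xt: "\<xi> \<in> topspace betaM" and p1: "p1 \<xi> \<noteq> ev_u y" and p2: "p2 \<xi> = ev_u y"
    by (auto simp: p_preimage_def)
  have Q0: "\<xi> (\<lambda>q. min (dist (snd q) y) 1) = 0"
    using p2_eval[OF p2 dmin_Ucb[of y]] by simp
  obtain u where u: "u \<in> Ucb" "\<xi> (\<lambda>q. u (fst q)) \<noteq> u y" using p1_ne[OF p1] by blast
  have P0: "\<xi> (\<lambda>q. min (dist (fst q) y) 1) > 0"
    by (rule xi_pos[OF xt u(1) _ u(2)]) (intro continuous_intros)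
  show "Phi (\<lambda>x. hG g x y) \<xi> = g \<xi>"
  proof (rule phi_eq[OF g three B fi _ _ xt Q0 P0])
    show "continuous_on UNIV (fst :: 'a \<times> 'a \<Rightarrow> 'a)" "continuous_on UNIV (snd :: 'a \<times> 'a \<Rightarrow> 'a)"
      by (intro continuous_intros)+
    fix q :: "'a \<times> 'a"
    show "dist (fst q) y \<le> dist (fst q) (snd q) + dist (snd q) y" by (rule dist_triangle)
    have "hG g (fst q) y \<le> hG g (fst q) (snd q) + hG g (snd q) y" by (rule tr)
    moreover have "hG g (fst q) (snd q) \<le> hG g (fst q) y + hG g y (snd q)" by (rule tr)
    moreover have "\<bar>hG g y (snd q)\<bar> \<le> B * dist (snd q) y" using hG_bound[OF B, of y "snd q"] by (simp add: dist_commute)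
    moreover have "\<bar>hG g (snd q) y\<bar> \<le> B * dist (snd q) y" using hG_bound[OF B] by simp
    ultimately show "\<bar>hG g (fst q) y - hG g (snd q) y - hG g (fst q) (snd q)\<bar> \<le> 2 * B * dist (snd q) y"
      by (simp add: abs_le_iff)
  qed
qed

lemma case_x:
  fixes x :: "'a::metric_space"
  assumes g: "g \<in> Gset" and three: "\<exists>a b c :: 'a. a \<noteq> b \<and> b \<noteq> c \<and> a \<noteq> c"
    and B: "\<forall>\<xi>\<in>topspace betaM. \<bar>g \<xi>\<bar> \<le> B"
  shows "\<And>a b. (\<lambda>w. - hG g x w) a - (\<lambda>w. - hG g x w) b \<le> hG g a b"
    and "\<And>\<xi>. \<xi> \<in> p_preimage {ev_u x} (S - {ev_u x}) \<Longrightarrow> Phi (\<lambda>w. - hG g x w) \<xi> = g \<xi>"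
proof -
  note tr = hG_tri[OF g three]
  show fi: "(\<lambda>w. - hG g x w) a - (\<lambda>w. - hG g x w) b \<le> hG g a b" for a b
    using tr[of x b a] by simp
  fix \<xi> assume xi: "\<xi> \<in> p_preimage {ev_u x} (S - {ev_u x})"
  then have xt: "\<xi> \<in> topspace betaM" and p2: "p2 \<xi> \<noteq> ev_u x" and p1: "p1 \<xi> = ev_u x"
    by (auto simp: p_preimage_def)
  have Q0: "\<xi> (\<lambda>q. min (dist (fst q) x) 1) = 0"
    using p1_eval[OF p1 dmin_Ucb[of x]] by simp
  obtain u where u: "u \<in> Ucb" "\<xi> (\<lambda>q. u (snd q)) \<noteq> u x" using p2_ne[OF p2] by blast
  have P0: "\<xi> (\<lambda>q. min (dist (snd q) x) 1) > 0"
    by (rule xi_pos[OF xt u(1) _ u(2)]) (intro continuous_intros)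
  show "Phi (\<lambda>w. - hG g x w) \<xi> = g \<xi>"
  proof (rule phi_eq[OF g three B fi _ _ xt Q0 P0])
    show "continuous_on UNIV (fst :: 'a \<times> 'a \<Rightarrow> 'a)" "continuous_on UNIV (snd :: 'a \<times> 'a \<Rightarrow> 'a)"
      by (intro continuous_intros)+
    fix q :: "'a \<times> 'a"
    show "dist (snd q) x \<le> dist (fst q) (snd q) + dist (fst q) x"
      using dist_triangle[of "snd q" x "fst q"] by (simp add: dist_commute)
    have "hG g x (snd q) \<le> hG g x (fst q) + hG g (fst q) (snd q)" by (rule tr)
    moreover have "hG g (fst q) (snd q) \<le> hG g (fst q) x + hG g x (snd q)" by (rule tr)
    moreover have "\<bar>hG g x (fst q)\<bar> \<le> B * dist (fst q) x" using hG_bound[OF B, of x "fst q"] by (simp add: dist_commute)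
    moreover have "\<bar>hG g (fst q) x\<bar> \<le> B * dist (fst q) x" using hG_bound[OF B] by simp
    ultimately show "\<bar>- hG g x (fst q) - - hG g x (snd q) - hG g (fst q) (snd q)\<bar> \<le> 2 * B * dist (fst q) x"
      by (simp add: abs_le_iff)
  qed
qed


lemma radon_meas:
  assumes rad: "radon betaM \<nu>" and h: "continuous_map betaM euclideanreal h"
  shows "h \<in> borel_measurable \<nu>"
proof (rule borel_measurableI)
  fix S :: "real set" assume S: "open S"
  have sp: "space \<nu> = topspace betaM" and st: "sets \<nu> = sets (borel_of betaM)"
    using rad by (auto simp: radon_def)
  have "openin betaM {x \<in> topspace betaM. h x \<in> S}"
    by (rule openin_continuous_map_preimage[OF h]) (simp add: S)
  moreover have "sets (borel_of betaM) = sigma_sets (topspace betaM) {U. openin betaM U}"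
    unfolding borel_of_def by (rule sets_measure_of) (auto dest: openin_subset)
  ultimately have "{x \<in> topspace betaM. h x \<in> S} \<in> sets (borel_of betaM)"
    by (auto intro: sigma_sets.Basic)
  moreover have "h -` S \<inter> space \<nu> = {x \<in> topspace betaM. h x \<in> S}" using sp by auto
  ultimately show "h -` S \<inter> space \<nu> \<in> sets \<nu>" using st by simp
qed

lemma radon_int:
  assumes rad: "radon betaM \<nu>" and h: "continuous_map betaM euclideanreal h"
  shows "integrable \<nu> h"
proof -
  have fm: "finite_measure \<nu>" using rad by (simp add: radon_def)
  have sp: "space \<nu> = topspace betaM" using rad by (simp add: radon_def)
  obtain B where B: "\<forall>\<xi>\<in>topspace betaM. \<bar>h \<xi>\<bar> \<le> B" using cont_bounded[OF h] by blast
  have "AE x in \<nu>. norm (h x) \<le> B" using B sp by (intro AE_I2) auto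
  then show ?thesis by (rule finite_measure.integrable_const_bound[OF fm _ radon_meas[OF rad h]])
qed

lemma Phi_cont:
  assumes "\<And>x u. \<bar>f x - f u\<bar> \<le> L * dist x u" "0 \<le> L"
  shows "continuous_map betaM euclideanreal (Phi f)"
  unfolding Phi_quot by (rule proj_cont[OF quot_Cb[OF assms]])

lemma main_ineq:
  fixes z :: "'a::metric_space"
  assumes rad: "radon betaM \<mu>" and radn: "radon betaM \<nu>" and eqn: "PhiStar_eq z \<nu> \<mu>"
    and g: "g \<in> Gset" and conc: "concentrated_on \<mu> S"
    and L: "\<And>x u. \<bar>f x - f u\<bar> \<le> B * dist x u" and B0: "0 \<le> B"
    and le: "\<And>\<xi>. \<xi> \<in> topspace betaM \<Longrightarrow> Phi f \<xi> \<le> g \<xi>"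
    and eq: "\<And>\<xi>. \<xi> \<in> S \<Longrightarrow> Phi f \<xi> = g \<xi>"
  shows "integral\<^sup>L \<mu> g \<le> integral\<^sup>L \<nu> g"
proof -
  have gc: "continuous_map betaM euclideanreal g" using g by (simp add: Gset_def)
  have pc: "continuous_map betaM euclideanreal (Phi f)" by (rule Phi_cont[OF L B0])
  have AE: "AE x in \<mu>. x \<in> S"
  proof (rule AE_I')
    show "space \<mu> - S \<in> null_sets \<mu>" using conc unfolding concentrated_on_def
      by (auto simp: null_sets_def)
  qed auto
  have "integral\<^sup>L \<mu> g = integral\<^sup>L \<mu> (Phi f)"
    by (rule integral_cong_AE[OF radon_meas[OF rad gc] radon_meas[OF rad pc]])
       (use AE eq in \<open>auto elim: AE_mp\<close>)
  also have "\<dots> = integral\<^sup>L \<mu> (Phi (\<lambda>x. f x - f z))"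
    by (simp add: Phi_quot quot_def)
  also have "\<dots> = integral\<^sup>L \<nu> (Phi (\<lambda>x. f x - f z))"
  proof -
    have "B-lipschitz_on UNIV (\<lambda>x. f x - f z)"
      by (rule lipschitz_onI) (use L B0 in \<open>auto simp: dist_real_def\<close>)
    then have "(\<lambda>x. f x - f z) \<in> Lip0 z" by (auto simp: Lip0_def)
    then show ?thesis using eqn by (simp add: PhiStar_eq_def)
  qed
  also have "\<dots> = integral\<^sup>L \<nu> (Phi f)"
    by (simp add: Phi_quot quot_def)
  also have "\<dots> \<le> integral\<^sup>L \<nu> g"
    by (rule integral_mono[OF radon_int[OF radn pc] radon_int[OF radn gc]])
       (use le radn in \<open>auto simp: radon_def\<close>)
  finally show ?thesis .
qed

lemma Phi_Gset:
  assumes f: "f \<in> Lip0 z"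
  shows "Phi f \<in> Gset" and "(\<lambda>\<xi>. - Phi f \<xi>) \<in> Gset"
proof -
  obtain C where C: "C-lipschitz_on UNIV f" using f by (auto simp: Lip0_def)
  have L: "\<bar>f x - f u\<bar> \<le> C * dist x u" for x u
    using C by (auto simp: lipschitz_on_def dist_real_def)
  have C0: "0 \<le> C" using C by (simp add: lipschitz_on_def)
  have Q: "quot f \<in> Cb_Mtilde" by (rule quot_Cb[OF L C0])
  have pc: "continuous_map betaM euclideanreal (Phi f)" by (rule Phi_cont[OF L C0])
  have val: "dist x y * Phi f (ev_beta (x, y)) = f x - f y" if "x \<noteq> y" for x y
  proof -
    have "Phi f (ev_beta (x,y)) = quot f (x,y)" by (simp add: Phi_quot ev_beta_app[OF Q])
    then show ?thesis using that by (simp add: quot_def)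
  qed
  show "Phi f \<in> Gset" unfolding Gset_def using pc val by auto
  show "(\<lambda>\<xi>. - Phi f \<xi>) \<in> Gset" unfolding Gset_def
  proof (intro CollectI conjI allI impI)
    show "continuous_map betaM euclideanreal (\<lambda>\<xi>. - Phi f \<xi>)"
      using pc by (intro continuous_map_minus)
    fix x u y :: 'a assume "x \<noteq> u \<and> u \<noteq> y \<and> x \<noteq> y"
    then show "dist x y * - Phi f (ev_beta (x, y)) \<le> dist x u * - Phi f (ev_beta (x, u)) + dist u y * - Phi f (ev_beta (u, y))"
      using val[of x y] val[of x u] val[of u y] by simp
  qed
qed

theorem proposition3p14:
  fixes z :: "'a::complete_space"
    and \<mu> :: "((('a \<times> 'a) \<Rightarrow> real) \<Rightarrow> real) measure"
  assumes three: "\<exists>a b c :: 'a. a \<noteq> b \<and> b \<noteq> c \<and> a \<noteq> c"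
    and rad: "radon betaM \<mu>"
    and conc: "(\<exists>y. concentrated_on \<mu> (p_preimage (RM z - {ev_u y}) {ev_u y}))
             \<or> (\<exists>x. concentrated_on \<mu> (p_preimage {ev_u x} (RM z - {ev_u x})))"
  shows "(\<forall>\<nu>. radon betaM \<nu> \<and> PhiStar_eq z \<nu> \<mu> \<longrightarrow> preceq \<mu> \<nu>) \<and> preceq_minimal \<mu>"
proof -
  have P1: "preceq \<mu> \<nu>" if radn: "radon betaM \<nu>" and eqn: "PhiStar_eq z \<nu> \<mu>" for \<nu>
    unfolding preceq_def
  proof
    fix g :: "((('a \<times> 'a) \<Rightarrow> real) \<Rightarrow> real) \<Rightarrow> real" assume g: "g \<in> Gset"
    have gc: "continuous_map betaM euclideanreal g" using g by (simp add: Gset_def)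
    obtain B where B: "\<forall>\<xi>\<in>topspace betaM. \<bar>g \<xi>\<bar> \<le> B" using cont_bounded[OF gc] by blast
    have B0: "0 \<le> B" by (rule B_nonneg[OF three B])
    from conc show "integral\<^sup>L \<mu> g \<le> integral\<^sup>L \<nu> g"
    proof
      assume "\<exists>y. concentrated_on \<mu> (p_preimage (RM z - {ev_u y}) {ev_u y})"
      then obtain y where cy: "concentrated_on \<mu> (p_preimage (RM z - {ev_u y}) {ev_u y})" by blast
      note cs = case_y[OF g three B, where y=y]
      note pb = phi_basic[OF g three B cs(1)]
      show ?thesis
        by (rule main_ineq[OF rad radn eqn g cy pb(1) B0 pb(4) cs(2)])
    next
      assume "\<exists>x. concentrated_on \<mu> (p_preimage {ev_u x} (RM z - {ev_u x}))"
      then obtain x where cx: "concentrated_on \<mu> (p_preimage {ev_u x} (RM z - {ev_u x}))" by blast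
      note cs = case_x[OF g three B, where x=x]
      note pb = phi_basic[OF g three B cs(1)]
      show ?thesis
        by (rule main_ineq[OF rad radn eqn g cx pb(1) B0 pb(4) cs(2)])
    qed
  qed
  have P2: "preceq_minimal \<mu>"
    unfolding preceq_minimal_def
  proof (intro allI impI, elim conjE)
    fix \<nu> assume radn: "radon betaM \<nu>" and pr: "preceq \<nu> \<mu>"
    have "PhiStar_eq z \<nu> \<mu>" unfolding PhiStar_eq_def
    proof
      fix f assume f: "f \<in> Lip0 z"
      have "integral\<^sup>L \<nu> (Phi f) \<le> integral\<^sup>L \<mu> (Phi f)"
        using pr Phi_Gset(1)[OF f] by (auto simp: preceq_def)
      moreover have "integral\<^sup>L \<nu> (\<lambda>\<xi>. - Phi f \<xi>) \<le> integral\<^sup>L \<mu> (\<lambda>\<xi>. - Phi f \<xi>)"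
        using pr Phi_Gset(2)[OF f] unfolding preceq_def by blast
      ultimately show "integral\<^sup>L \<nu> (Phi f) = integral\<^sup>L \<mu> (Phi f)" by simp
    qed
    then show "preceq \<mu> \<nu>" using P1 radn by blast
  qed
  show ?thesis using P1 P2 by blast
qed

end
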